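(* Let $R$ be a commutative associative ring with unity, let $\operatorname{T}=\{x_1,x_2,\ldots\}$ be a trivial quandle with more than one element, $A=R[\operatorname{T}]$, $L=A^{(-)}$, and for $k\ge1$ let $L^k$ be the subalgebra of $L$ generated by products of $k$ elements of $L$. Then: (1) $L^2=L^3$, and this algebra has basis $\{x_1-x_2,\,x_2-x_3,\,\ldots\}$; in particular, if $\operatorname{T}$ has $n$ elements, then $L^2$ has rank $n-1$. (2) $(L^2)^2=0$, i.e. $L$ is metabelian. (3) If moreover $1/2\in R$ and $J=A^{(+)}$, then $J^2=J$.
   Context: A trivial quandle is a set $\operatorname{T}$ with operation $xy=x$ for all $x,y$. The quandle ring $R[\operatorname{T}]$ is the free $R$-module with basis $\operatorname{T}$, with multiplication $\big(\sum_i\alpha_i x_i\big)\big(\sum_j\beta_j x_j\big)=\sum_{i,j}\alpha_i\beta_j (x_ix_j)$. For an $R$-algebra $A$, $A^{(-)}$ is the same $R$-module with multiplication $x\circ y=xy-yx$, and (when $1/2\in R$) $A^{(+)}$ is the same $R$-module with multiplication $x\odot y=\tfrac12(xy+yx)$. For an algebra $B$, $B^2$ denotes the subalgebra generated by all products of two elements of $B$. *)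

theory Defs
  imports Main "HOL-Library.Function_Algebras"
begin

text \<open>Elements of the free R-module R[T] are finitely supported functions
  T \<Rightarrow> R, represented as functions 'a \<Rightarrow> 'r with finite support contained in T.\<close>

definition supp :: "('a \<Rightarrow> 'r::zero) \<Rightarrow> 'a set" where
  "supp f = {x. f x \<noteq> 0}"

definition qring :: "'a set \<Rightarrow> ('a \<Rightarrow> 'r::zero) set" where
  "qring T = {f. finite (supp f) \<and> supp f \<subseteq> T}"

definition bas :: "'a \<Rightarrow> 'a \<Rightarrow> 'r::zero_neq_one" where
  "bas x = (\<lambda>z. if z = x then 1 else 0)"

definition smul :: "'r::times \<Rightarrow> ('a \<Rightarrow> 'r) \<Rightarrow> 'a \<Rightarrow> 'r" where
  "smul c f = (\<lambda>z. c * f z)"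

text \<open>multiplication of the quandle ring for a quandle operation op:
  (\<Sum> f(x) x)(\<Sum> g(y) y) = \<Sum> f(x) g(y) (op x y)\<close>
definition qmult :: "('a \<Rightarrow> 'a \<Rightarrow> 'a) \<Rightarrow> ('a \<Rightarrow> 'r::comm_ring_1) \<Rightarrow> ('a \<Rightarrow> 'r) \<Rightarrow> 'a \<Rightarrow> 'r" where
  "qmult op f g = (\<lambda>z. \<Sum>x\<in>supp f. \<Sum>y\<in>supp g. if op x y = z then f x * g y else 0)"

definition triv_op :: "'a \<Rightarrow> 'a \<Rightarrow> 'a" where
  "triv_op x y = x"

definition minus_mult :: "('f \<Rightarrow> 'f \<Rightarrow> 'f) \<Rightarrow> 'f \<Rightarrow> 'f \<Rightarrow> ('f::minus)" where
  "minus_mult m a b = m a b - m b a"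

text \<open>A^(+): x \<odot> y = h (xy + yx), where h = 1/2 in R\<close>
definition plus_mult :: "'r \<Rightarrow> (('a \<Rightarrow> 'r) \<Rightarrow> ('a \<Rightarrow> 'r) \<Rightarrow> ('a \<Rightarrow> 'r)) \<Rightarrow> ('a \<Rightarrow> 'r) \<Rightarrow> ('a \<Rightarrow> 'r) \<Rightarrow> 'a \<Rightarrow> ('r::comm_ring_1)" where
  "plus_mult h m a b = smul h (m a b + m b a)"

inductive is_prod :: "('f \<Rightarrow> 'f \<Rightarrow> 'f) \<Rightarrow> 'f set \<Rightarrow> nat \<Rightarrow> 'f \<Rightarrow> bool" for m A where
  base: "a \<in> A \<Longrightarrow> is_prod m A 1 a"
| step: "is_prod m A i a \<Longrightarrow> is_prod m A j b \<Longrightarrow> is_prod m A (i + j) (m a b)"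

definition prods :: "('f \<Rightarrow> 'f \<Rightarrow> 'f) \<Rightarrow> 'f set \<Rightarrow> nat \<Rightarrow> 'f set" where
  "prods m A k = {a. is_prod m A k a}"

inductive_set subalg :: "(('a \<Rightarrow> 'r) \<Rightarrow> ('a \<Rightarrow> 'r) \<Rightarrow> ('a \<Rightarrow> 'r)) \<Rightarrow> ('a \<Rightarrow> 'r::comm_ring_1) set \<Rightarrow> ('a \<Rightarrow> 'r) set"
  for m S where
  gen: "a \<in> S \<Longrightarrow> a \<in> subalg m S"
| zero: "0 \<in> subalg m S"
| add: "a \<in> subalg m S \<Longrightarrow> b \<in> subalg m S \<Longrightarrow> a + b \<in> subalg m S"
| smul: "a \<in> subalg m S \<Longrightarrow> smul c a \<in> subalg m S"
| mult: "a \<in> subalg m S \<Longrightarrow> b \<in> subalg m S \<Longrightarrow> m a b \<in> subalg m S"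

definition alg_pow :: "(('a \<Rightarrow> 'r) \<Rightarrow> ('a \<Rightarrow> 'r) \<Rightarrow> ('a \<Rightarrow> 'r)) \<Rightarrow> ('a \<Rightarrow> 'r::comm_ring_1) set \<Rightarrow> nat \<Rightarrow> ('a \<Rightarrow> 'r) set" where
  "alg_pow m A k = subalg m (prods m A k)"

definition rspan :: "('a \<Rightarrow> 'r::comm_ring_1) set \<Rightarrow> ('a \<Rightarrow> 'r) set" where
  "rspan B = {(\<Sum>b\<in>S. smul (c b) b) | S c. finite S \<and> S \<subseteq> B}"

definition rindep :: "('a \<Rightarrow> 'r::comm_ring_1) set \<Rightarrow> bool" where
  "rindep B = (\<forall>S c. finite S \<and> S \<subseteq> B \<and> (\<Sum>b\<in>S. smul (c b) b) = 0 \<longrightarrow> (\<forall>b\<in>S. c b = 0))"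

definition is_basis :: "('a \<Rightarrow> 'r::comm_ring_1) set \<Rightarrow> ('a \<Rightarrow> 'r) set \<Rightarrow> bool" where
  "is_basis B M = (B \<subseteq> M \<and> rindep B \<and> rspan B = M)"

end

theory Submission
  imports Defs
begin


lemma sum_fapp: "(sum F S) z = sum (\<lambda>b. F b z) S"
  by (induction S rule: infinite_finite_induct) auto

definition eps :: "('a \<Rightarrow> 'r::comm_ring_1) \<Rightarrow> 'r" where
  "eps f = sum f (supp f)"

lemma supp_add: "supp (f + g :: 'a \<Rightarrow> 'r::comm_ring_1) \<subseteq> supp f \<union> supp g" by (auto simp: supp_def)
lemma supp_diff: "supp (f - g :: 'a \<Rightarrow> 'r::comm_ring_1) \<subseteq> supp f \<union> supp g" by (auto simp: supp_def)
lemma supp_smul: "supp (smul c f :: 'a \<Rightarrow> 'r::comm_ring_1) \<subseteq> supp f" by (auto simp: supp_def smul_def)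
lemma supp_zero[simp]: "supp 0 = {}" by (auto simp: supp_def)
lemma supp_bas[simp]: "supp (bas x :: 'a \<Rightarrow> 'r::zero_neq_one) = {x}" by (auto simp: supp_def bas_def)

lemma qring_add: "f \<in> qring T \<Longrightarrow> g \<in> qring T \<Longrightarrow> (f + g :: 'a \<Rightarrow> 'r::comm_ring_1) \<in> qring T"
  using supp_add[of f g] unfolding qring_def by (auto intro: finite_subset)
lemma qring_diff: "f \<in> qring T \<Longrightarrow> g \<in> qring T \<Longrightarrow> (f - g :: 'a \<Rightarrow> 'r::comm_ring_1) \<in> qring T"
  using supp_diff[of f g] unfolding qring_def by (auto intro: finite_subset)
lemma qring_smul: "f \<in> qring T \<Longrightarrow> (smul c f :: 'a \<Rightarrow> 'r::comm_ring_1) \<in> qring T"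
  using supp_smul[of c f] unfolding qring_def by (auto intro: finite_subset)
lemma qring_zero: "0 \<in> qring T" unfolding qring_def by auto
lemma qring_bas: "x \<in> T \<Longrightarrow> (bas x :: 'a \<Rightarrow> 'r::comm_ring_1) \<in> qring T" unfolding qring_def by auto
lemma qring_sum: fixes F :: "'b \<Rightarrow> 'a \<Rightarrow> 'r::comm_ring_1" shows "finite S \<Longrightarrow> (\<forall>b\<in>S. F b \<in> qring T) \<Longrightarrow> sum F S \<in> qring T"
  by (induction S rule: finite_induct) (auto intro: qring_add qring_zero)

lemma eps_eq: "finite S \<Longrightarrow> supp f \<subseteq> S \<Longrightarrow> eps f = sum f S"
  unfolding eps_def by (rule sum.mono_neutral_left) (auto simp: supp_def)

lemma eps_add: "finite (supp f) \<Longrightarrow> finite (supp g) \<Longrightarrow> eps (f + g) = eps f + eps g"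
proof -
  assume a: "finite (supp f)" "finite (supp g)"
  let ?U = "supp f \<union> supp g"
  have "eps (f+g) = sum (f+g) ?U" using a supp_add[of f g] by (intro eps_eq) auto
  also have "\<dots> = sum f ?U + sum g ?U" by (simp add: sum.distrib)
  also have "\<dots> = eps f + eps g" using a by (simp add: eps_eq[of "supp f \<union> supp g"])
  finally show ?thesis .
qed

lemma eps_diff: "finite (supp f) \<Longrightarrow> finite (supp g) \<Longrightarrow> eps (f - g) = eps f - eps g"
proof -
  assume a: "finite (supp f)" "finite (supp g)"
  let ?U = "supp f \<union> supp g"
  have "eps (f-g) = sum (f-g) ?U" using a supp_diff[of f g] by (intro eps_eq) auto
  also have "\<dots> = sum f ?U - sum g ?U" by (simp add: sum_subtractf)
  also have "\<dots> = eps f - eps g" using a by (simp add: eps_eq[of "supp f \<union> supp g"])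
  finally show ?thesis .
qed

lemma eps_smul: "finite (supp f) \<Longrightarrow> eps (smul c f) = c * eps f"
proof -
  assume a: "finite (supp f)"
  have "eps (smul c f) = sum (smul c f) (supp f)" using a supp_smul[of c f] by (intro eps_eq) auto
  then show ?thesis by (simp add: eps_def smul_def sum_distrib_left)
qed

lemma eps_zero[simp]: "eps 0 = 0" by (simp add: eps_def)
lemma eps_bas[simp]: "eps (bas x :: 'a \<Rightarrow> 'r::comm_ring_1) = 1" unfolding eps_def supp_bas by (simp add: bas_def)

lemma eps_sum: fixes F :: "'b \<Rightarrow> 'a \<Rightarrow> 'r::comm_ring_1" shows "finite S \<Longrightarrow> (\<forall>b\<in>S. finite (supp (F b))) \<Longrightarrow> eps (sum F S) = (\<Sum>b\<in>S. eps (F b))"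
proof (induction S rule: finite_induct)
  case (insert x S)
  have "finite (supp (sum F S))" using qring_sum[of S F UNIV] insert unfolding qring_def by auto
  moreover have "finite (supp (F x))" using insert by auto
  ultimately have e1: "eps (F x + sum F S) = eps (F x) + eps (sum F S)" by (rule eps_add[rotated])
  have e2: "sum F (insert x S) = F x + sum F S" using insert(1,2) by (rule sum.insert)
  have e3: "eps (sum F S) = (\<Sum>b\<in>S. eps (F b))" using insert by simp
  have "eps (sum F (insert x S)) = eps (F x) + (\<Sum>b\<in>S. eps (F b))" unfolding e2 e1 e3 ..
  moreover have "(\<Sum>b\<in>insert x S. eps (F b)) = eps (F x) + (\<Sum>b\<in>S. eps (F b))" using insert(1,2) by (rule sum.insert)
  ultimately show ?case by (simp only:)
qed simp

lemma qmult_triv: "finite (supp f) \<Longrightarrow> qmult triv_op f g = smul (eps g) f"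
proof (rule ext)
  fix z assume fin: "finite (supp f)"
  have "qmult triv_op f g z = (\<Sum>x\<in>supp f. if x = z then f x * eps g else 0)"
    unfolding qmult_def triv_op_def eps_def
    by (intro sum.cong refl) (auto simp: sum_distrib_left)
  also have "\<dots> = (if z \<in> supp f then f z * eps g else 0)" using fin by (simp add: sum.delta')
  also have "\<dots> = smul (eps g) f z" by (auto simp: smul_def supp_def mult.commute)
  finally show "qmult triv_op f g z = smul (eps g) f z" .
qed

lemma smul_one[simp]: "smul 1 (f :: 'a \<Rightarrow> 'r::comm_ring_1) = f" by (simp add: smul_def)
lemma smul_zero[simp]: "smul 0 (f :: 'a \<Rightarrow> 'r::comm_ring_1) = 0" by (auto simp: smul_def)
lemma smul_zero2[simp]: "smul c (0 :: 'a \<Rightarrow> 'r::comm_ring_1) = 0" by (auto simp: smul_def)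

lemma decomp: "finite (supp f) \<Longrightarrow> f = (\<Sum>x\<in>supp f. smul (f x) (bas x :: 'a \<Rightarrow> 'r::comm_ring_1))"
proof (rule ext)
  fix z assume fin: "finite (supp f)"
  have "(\<Sum>x\<in>supp f. smul (f x) (bas x :: 'a \<Rightarrow> 'r)) z = (\<Sum>x\<in>supp f. if x = z then f x else 0)"
    unfolding sum_fapp smul_def bas_def by (intro sum.cong) auto
  also have "\<dots> = f z" using fin by (auto simp: sum.delta' supp_def)
  finally show "f z = (\<Sum>x\<in>supp f. smul (f x) (bas x :: 'a \<Rightarrow> 'r)) z" by simp
qed

lemma decomp0: "finite (supp f) \<Longrightarrow> eps f = 0 \<Longrightarrow>
   f = (\<Sum>x\<in>supp f. smul (f x) (bas x - bas x0 :: 'a \<Rightarrow> 'r::comm_ring_1))"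
proof (rule ext)
  fix z assume fin: "finite (supp f)" and e0: "eps f = 0"
  have "(\<Sum>x\<in>supp f. smul (f x) (bas x - bas x0 :: 'a \<Rightarrow> 'r)) z
     = (\<Sum>x\<in>supp f. (if x = z then f x else 0) - f x * (if z = x0 then 1 else 0))"
    unfolding sum_fapp smul_def bas_def by (intro sum.cong) (auto simp: algebra_simps)
  also have "\<dots> = f z - eps f * (if z = x0 then 1 else 0)"
    using fin by (auto simp: sum_subtractf sum.delta' supp_def eps_def sum_distrib_right)
  also have "\<dots> = f z" using e0 by simp
  finally show "f z = (\<Sum>x\<in>supp f. smul (f x) (bas x - bas x0 :: 'a \<Rightarrow> 'r)) z" by simp
qed

lemma subalg_sum: fixes F :: "'b \<Rightarrow> 'a \<Rightarrow> 'r::comm_ring_1" shows "finite S \<Longrightarrow> (\<forall>b\<in>S. F b \<in> subalg m G) \<Longrightarrow> sum F S \<in> subalg m G"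
  by (induction S rule: finite_induct) (auto intro: subalg.zero subalg.add)



abbreviation "Lmul \<equiv> minus_mult (qmult triv_op)"
abbreviation "A0 T \<equiv> {f \<in> qring T. eps (f :: 'a \<Rightarrow> 'r::comm_ring_1) = 0}"

lemma fin_q: "f \<in> qring T \<Longrightarrow> finite (supp f)" by (simp add: qring_def)

lemma Lm_eq: "finite (supp f) \<Longrightarrow> finite (supp g) \<Longrightarrow>
  Lmul f g = smul (eps g) f - smul (eps f) (g :: 'a \<Rightarrow> 'r::comm_ring_1)"
  by (simp add: minus_mult_def qmult_triv)

lemma Lm_q: "f \<in> qring T \<Longrightarrow> g \<in> qring T \<Longrightarrow> Lmul f g \<in> qring T \<and> eps (Lmul f g) = (0::'r::comm_ring_1)"
proof -
  assume a: "f \<in> qring T" "g \<in> qring T"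
  then have fs: "finite (supp f)" "finite (supp g)" by (auto simp: fin_q)
  have q: "smul (eps g) f \<in> qring T" "smul (eps f) g \<in> qring T" using a by (auto intro: qring_smul)
  then have "finite (supp (smul (eps g) f))" "finite (supp (smul (eps f) g))" by (auto simp: fin_q)
  then have "eps (Lmul f g) = eps g * eps f - eps f * eps g"
    using fs by (simp add: Lm_eq eps_diff eps_smul)
  then show ?thesis using q fs by (simp add: Lm_eq qring_diff)
qed

lemma is_prod_ge1: "is_prod m S k a \<Longrightarrow> k \<ge> 1 \<and> (k = 1 \<longrightarrow> a \<in> S)"
  by (induction rule: is_prod.induct) auto

lemma prods_L: "is_prod Lmul (qring T) k a \<Longrightarrow> a \<in> qring T \<and> (k \<noteq> 1 \<longrightarrow> eps a = (0::'r::comm_ring_1))"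
  by (induction rule: is_prod.induct) (auto dest: Lm_q)

lemma subalg_A0: assumes S: "S \<subseteq> A0 T" shows "subalg Lmul S \<subseteq> (A0 T :: ('a \<Rightarrow> 'r::comm_ring_1) set)"
proof
  fix a assume "a \<in> subalg Lmul S"
  then show "a \<in> A0 T"
  proof (induction rule: subalg.induct)
    case (add a b)
    have "a + b \<in> qring T" using add.IH by (blast intro: qring_add)
    moreover have "eps (a + b) = 0" using add.IH fin_q[of a T] fin_q[of b T] eps_add[of a b] by auto
    ultimately show ?case by blast
  next
    case (smul a c) then show ?case by (auto simp: qring_smul eps_smul fin_q)
  next
    case (mult a b) then show ?case by (auto dest: Lm_q)
  next
    case zero show ?case using qring_zero eps_zero by blast
  qed (use S in auto)
qed

lemma bas_diff: "Lmul (bas x) (bas y) = (bas x - bas y :: 'a \<Rightarrow> 'r::comm_ring_1)"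
  by (simp add: Lm_eq)

lemma L2: assumes "x0 \<in> T" "k = 2 \<or> k = 3"
  shows "alg_pow Lmul (qring T) k = (A0 T :: ('a \<Rightarrow> 'r::comm_ring_1) set)"
proof
  show "alg_pow Lmul (qring T) k \<subseteq> A0 T" unfolding alg_pow_def
    using assms(2) by (intro subalg_A0) (auto simp: prods_def dest: prods_L)
next
  have gen: "(bas x - bas x0 :: 'a \<Rightarrow> 'r) \<in> prods Lmul (qring T) k" if "x \<in> T" for x
  proof -
    have p2: "is_prod Lmul (qring T) (1+1) (Lmul (bas x) (bas x0) :: 'a \<Rightarrow> 'r)"
      using that assms(1) by (intro is_prod.step is_prod.base qring_bas)
    then have p2': "is_prod Lmul (qring T) 2 (bas x - bas x0 :: 'a \<Rightarrow> 'r)" by (simp only: bas_diff one_add_one)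
    have "is_prod Lmul (qring T) (2+1) (Lmul (bas x - bas x0) (bas x0) :: 'a \<Rightarrow> 'r)"
      using p2' assms(1) by (intro is_prod.step is_prod.base qring_bas)
    moreover have "Lmul (bas x - bas x0) (bas x0) = (bas x - bas x0 :: 'a \<Rightarrow> 'r)"
    proof -
      have f1: "finite (supp (bas x - bas x0 :: 'a \<Rightarrow> 'r))"
        using qring_diff[OF qring_bas[OF that] qring_bas[OF assms(1)]] fin_q by blast
      have e1: "eps (bas x - bas x0 :: 'a \<Rightarrow> 'r) = 0" by (simp add: eps_diff)
      show ?thesis using f1 e1 by (simp add: Lm_eq)
    qed
    ultimately show ?thesis using p2' assms(2) by (auto simp: prods_def)
  qed
  show "(A0 T :: ('a \<Rightarrow> 'r) set) \<subseteq> alg_pow Lmul (qring T) k"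
  proof
    fix f :: "'a \<Rightarrow> 'r" assume f: "f \<in> A0 T"
    then have fs: "finite (supp f)" "supp f \<subseteq> T" by (auto simp: qring_def)
    have eq: "f = (\<Sum>x\<in>supp f. smul (f x) (bas x - bas x0))" using decomp0 fs f by auto
    have "(\<Sum>x\<in>supp f. smul (f x) (bas x - bas x0)) \<in> alg_pow Lmul (qring T) k" unfolding alg_pow_def
      using fs gen by (intro subalg_sum) (auto intro: subalg.smul subalg.gen)
    then show "f \<in> alg_pow Lmul (qring T) k" using eq by simp
  qed
qed

lemma L2sq: "alg_pow Lmul (A0 T) 2 = {0 :: 'a \<Rightarrow> 'r::comm_ring_1}"
proof -
  have "prods Lmul (A0 T) 2 \<subseteq> {0 :: 'a \<Rightarrow> 'r}"
  proof
    fix a :: "'a \<Rightarrow> 'r" assume "a \<in> prods Lmul (A0 T) 2"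
    then have "is_prod Lmul (A0 T) 2 a" by (simp add: prods_def)
    then show "a \<in> {0}"
    proof cases
      case (step i x j y)
      then have "x \<in> A0 T" "y \<in> A0 T" using is_prod_ge1[OF step(3)] is_prod_ge1[OF step(4)] by auto
      then have "Lmul x y = 0" by (subst Lm_eq) (auto simp: fin_q)
      then show ?thesis using step by simp
    qed simp
  qed
  moreover have "subalg Lmul S \<subseteq> {0}" if "S \<subseteq> {0 :: 'a \<Rightarrow> 'r}" for S
  proof
    fix a assume "a \<in> subalg Lmul S" then show "a \<in> {0}"
      using that by (induction rule: subalg.induct) (auto simp: Lm_eq)
  qed
  ultimately show ?thesis unfolding alg_pow_def by (auto intro: subalg.zero)
qed

lemma Jpart: assumes h: "2 * h = (1::'r::comm_ring_1)"
  shows "alg_pow (plus_mult h (qmult triv_op)) (qring T) 2 = (qring T :: ('a \<Rightarrow> 'r) set)"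
proof
  let ?J = "plus_mult h (qmult triv_op) :: ('a \<Rightarrow> 'r) \<Rightarrow> _"
  have Jq: "?J a b \<in> qring T" if "a \<in> qring T" "b \<in> qring T" for a b
    using that by (simp add: plus_mult_def qmult_triv fin_q qring_smul qring_add)
  have "is_prod ?J (qring T) k a \<Longrightarrow> a \<in> qring T" for k a
    by (induction rule: is_prod.induct) (auto intro: Jq)
  then have P: "prods ?J (qring T) 2 \<subseteq> qring T" by (auto simp: prods_def)
  show "alg_pow ?J (qring T) 2 \<subseteq> qring T"
  proof
    fix a assume "a \<in> alg_pow ?J (qring T) 2"
    then show "a \<in> qring T" unfolding alg_pow_def
    proof (induction rule: subalg.induct)
      case (add a b) show ?case by (rule qring_add) (fact add.IH)+
    next
      case (smul a c) show ?case by (rule qring_smul) (fact smul.IH)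
    next
      case (mult a b) show ?case by (rule Jq) (fact mult.IH)+
    next
      case (gen a) then show ?case using P by auto
    next
      case zero show ?case by (rule qring_zero)
    qed
  qed
  have gen: "bas x \<in> prods ?J (qring T) 2" if "x \<in> T" for x
  proof -
    have "is_prod ?J (qring T) (1+1) (?J (bas x) (bas x))"
      using that by (intro is_prod.step is_prod.base qring_bas)
    moreover have "?J (bas x) (bas x) = bas x"
    proof
      fix z
      have "?J (bas x) (bas x) z = h * (bas x z + bas x z)"
        by (simp add: plus_mult_def qmult_triv smul_def)
      also have "\<dots> = (2 * h) * bas x z" by (simp add: algebra_simps)
      finally show "?J (bas x) (bas x) z = bas x z" using h by simp
    qed
    ultimately have "is_prod ?J (qring T) 2 (bas x)" by (simp only: one_add_one)
    then show ?thesis by (simp add: prods_def)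
  qed
  show "qring T \<subseteq> alg_pow ?J (qring T) 2"
  proof
    fix f :: "'a \<Rightarrow> 'r" assume f: "f \<in> qring T"
    then have fs: "finite (supp f)" "supp f \<subseteq> T" by (auto simp: qring_def)
    have "f = (\<Sum>x\<in>supp f. smul (f x) (bas x))" using decomp fs by auto
    also have "\<dots> \<in> alg_pow ?J (qring T) 2" unfolding alg_pow_def
      using fs gen by (intro subalg_sum) (auto intro: subalg.smul subalg.gen)
    finally show "f \<in> alg_pow ?J (qring T) 2" .
  qed
qed



lemma smul_sum: "smul d (sum F S) = (\<Sum>b\<in>S. smul d (F b :: 'a \<Rightarrow> 'r::comm_ring_1))"
  by (rule ext) (simp add: sum_fapp smul_def sum_distrib_left)
lemma smul_addc: "smul (x + y) f = smul x f + smul y (f :: 'a \<Rightarrow> 'r::comm_ring_1)"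
  by (rule ext) (simp add: smul_def algebra_simps)
lemma smul_if: "smul (if P then x else 0) f = (if P then smul x f else (0 :: 'a \<Rightarrow> 'r::comm_ring_1))"
  by simp
lemma smul_smul: "smul d (smul c f) = smul (d * c) (f :: 'a \<Rightarrow> 'r::comm_ring_1)"
  by (rule ext) (simp add: smul_def)

lemma rspan_zero: "0 \<in> rspan (B :: ('a \<Rightarrow> 'r::comm_ring_1) set)"
  unfolding rspan_def by (rule CollectI, rule exI[of _ "{}"]) simp

lemma rspan_gen: "b \<in> B \<Longrightarrow> b \<in> rspan (B :: ('a \<Rightarrow> 'r::comm_ring_1) set)"
  unfolding rspan_def by (rule CollectI, rule exI[of _ "{b}"], rule exI[of _ "\<lambda>_. 1"]) simp

lemma rspan_smul: assumes "a \<in> rspan (B :: ('a \<Rightarrow> 'r::comm_ring_1) set)" shows "smul d a \<in> rspan B"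
proof -
  obtain S c where a: "a = (\<Sum>b\<in>S. smul (c b) b)" "finite S" "S \<subseteq> B"
    using assms unfolding rspan_def by blast
  have "smul d a = (\<Sum>b\<in>S. smul (d * c b) b)" unfolding a(1) smul_sum smul_smul ..
  then show ?thesis unfolding rspan_def using a(2,3)
    by (intro CollectI exI[of _ S] exI[of _ "\<lambda>b. d * c b"]) simp
qed

lemma rspan_add: assumes "a \<in> rspan (B :: ('a \<Rightarrow> 'r::comm_ring_1) set)" "a' \<in> rspan B"
  shows "a + a' \<in> rspan B"
proof -
  obtain S1 c1 where a: "a = (\<Sum>b\<in>S1. smul (c1 b) b)" "finite S1" "S1 \<subseteq> B"
    using assms(1) unfolding rspan_def by blast
  obtain S2 c2 where a': "a' = (\<Sum>b\<in>S2. smul (c2 b) b)" "finite S2" "S2 \<subseteq> B"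
    using assms(2) unfolding rspan_def by blast
  let ?U = "S1 \<union> S2"
  define c where "c b = (if b \<in> S1 then c1 b else 0) + (if b \<in> S2 then c2 b else 0)" for b
  have "(\<Sum>b\<in>?U. smul (c b) b) = (\<Sum>b\<in>?U. smul (if b \<in> S1 then c1 b else 0) b) + (\<Sum>b\<in>?U. smul (if b \<in> S2 then c2 b else 0) b)"
    unfolding c_def smul_addc sum.distrib ..
  also have "(\<Sum>b\<in>?U. smul (if b \<in> S1 then c1 b else 0) b) = a"
    unfolding a(1) using a(2) a'(2) by (intro sum.mono_neutral_cong_right) auto
  also have "(\<Sum>b\<in>?U. smul (if b \<in> S2 then c2 b else 0) b) = a'"
    unfolding a'(1) using a(2) a'(2) by (intro sum.mono_neutral_cong_right) auto
  finally have "a + a' = (\<Sum>b\<in>?U. smul (c b) b)" by (simp add: plus_fun_def)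
  then show ?thesis unfolding rspan_def using a(2,3) a'(2,3)
    by (intro CollectI exI[of _ ?U] exI[of _ c]) simp
qed

lemma rspan_sum: fixes F :: "'b \<Rightarrow> 'a \<Rightarrow> 'r::comm_ring_1"
  shows "finite S \<Longrightarrow> (\<forall>b\<in>S. F b \<in> rspan B) \<Longrightarrow> sum F S \<in> rspan B"
  by (induction S rule: finite_induct) (auto intro: rspan_zero rspan_add)



definition bbd :: "(nat \<Rightarrow> 'a) \<Rightarrow> nat \<Rightarrow> 'a \<Rightarrow> 'r::comm_ring_1" where
  "bbd e i = bas (e i) - bas (e (Suc i))"

lemma bb_val: "inj_on e I \<Longrightarrow> i \<in> I \<Longrightarrow> Suc i \<in> I \<Longrightarrow> k \<in> I \<Longrightarrow>
  bbd e i (e k) = (if k = i then 1 else 0) - (if k = Suc i then 1 else (0::'r::comm_ring_1))"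
  unfolding bbd_def bas_def by (auto simp: inj_on_eq_iff)

lemma indep:
  fixes c :: "('a \<Rightarrow> 'r::comm_ring_1) \<Rightarrow> 'r"
  assumes inj: "inj_on e I" and dc: "\<And>i j. j \<le> i \<Longrightarrow> i \<in> I \<Longrightarrow> j \<in> I"
    and fin: "finite S" and SB: "S \<subseteq> bbd e ` {i. Suc i \<in> I}"
    and z: "(\<Sum>b\<in>S. smul (c b) b) = 0"
  shows "\<forall>b\<in>S. c b = 0"
proof -
  have step: "c (bbd e k) = 0" if k: "Suc k \<in> I" "bbd e k \<in> S"
    and H: "k > 0 \<Longrightarrow> bbd e (k - 1) \<in> S \<Longrightarrow> c (bbd e (k - 1)) = 0" for k
  proof -
    have kI: "k \<in> I" using dc[OF _ k(1)] by simp
    let ?g = "\<lambda>b. c b * b (e k)"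
    have "0 = (\<Sum>b\<in>S. smul (c b) b) (e k)" using z by simp
    also have "\<dots> = (\<Sum>b\<in>S. ?g b)" by (simp add: sum_fapp smul_def)
    also have "\<dots> = ?g (bbd e k) + (\<Sum>b\<in>S - {bbd e k}. ?g b)" using fin k(2) by (rule sum.remove)
    also have "(\<Sum>b\<in>S - {bbd e k}. ?g b) = 0"
    proof (rule sum.neutral, rule ballI)
      fix b assume b: "b \<in> S - {bbd e k}"
      then obtain i where i: "Suc i \<in> I" "b = bbd e i" using SB by auto
      have iI: "i \<in> I" using dc[OF _ i(1)] by simp
      have ik: "i \<noteq> k" using b i by auto
      show "?g b = 0"
      proof (cases "k = Suc i")
        case True
        then have "c b = 0" using H i b by simp
        then show ?thesis by simp
      next
        case False
        then show ?thesis using bb_val[where 'r='r, OF inj iI i(1) kI] ik i by simp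
      qed
    qed
    also have "?g (bbd e k) = c (bbd e k)" using bb_val[where 'r='r, OF inj kI k(1) kI] by simp
    finally show ?thesis by simp
  qed
  have all: "\<forall>k. Suc k \<in> I \<longrightarrow> bbd e k \<in> S \<longrightarrow> c (bbd e k) = 0"
  proof
    fix k show "Suc k \<in> I \<longrightarrow> bbd e k \<in> S \<longrightarrow> c (bbd e k) = 0"
    proof (induction k)
      case 0 then show ?case using step by auto
    next
      case (Suc k)
      show ?case
      proof (intro impI)
        assume a: "Suc (Suc k) \<in> I" "bbd e (Suc k) \<in> S"
        have "Suc k \<in> I" using dc[OF _ a(1)] by simp
        then show "c (bbd e (Suc k)) = 0" using step[OF a] Suc by simp
      qed
    qed
  qed
  show ?thesis using all SB by auto
qed

lemma bb_A0: "inj_on e I \<Longrightarrow> e ` I = T \<Longrightarrow> i \<in> I \<Longrightarrow> Suc i \<in> I \<Longrightarrow> (bbd e i :: 'a \<Rightarrow> 'r::comm_ring_1) \<in> A0 T"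
  unfolding bbd_def by (auto intro!: qring_diff qring_bas simp: eps_diff)

lemma span:
  assumes inj: "inj_on e I" and dc: "\<And>i j. j \<le> i \<Longrightarrow> i \<in> I \<Longrightarrow> j \<in> I"
    and I0: "0 \<in> I" and T: "e ` I = T"
  shows "rspan (bbd e ` {i. Suc i \<in> I}) = (A0 T :: ('a \<Rightarrow> 'r::comm_ring_1) set)"
proof
  let ?B = "bbd e ` {i. Suc i \<in> I} :: ('a \<Rightarrow> 'r) set"
  have dI: "i \<in> I" if "Suc i \<in> I" for i using dc[OF _ that] by simp
  have BA: "?B \<subseteq> A0 T" using bb_A0[OF inj T] dI by auto
  show "rspan ?B \<subseteq> A0 T"
  proof
    fix a assume "a \<in> rspan ?B"
    then obtain S c where a: "a = (\<Sum>b\<in>S. smul (c b) b)" "finite S" "S \<subseteq> ?B"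
      unfolding rspan_def by blast
    have each: "smul (c b) b \<in> A0 T" if "b \<in> S" for b
    proof -
      have "b \<in> A0 T" using a(3) that BA by blast
      then show ?thesis using eps_smul[of b "c b"] qring_smul[of b T "c b"] fin_q[of b T] by auto
    qed
    have "a \<in> qring T" unfolding a(1) using a(2) each by (intro qring_sum) auto
    moreover have "eps a = 0" unfolding a(1) using a(2) each
      by (subst eps_sum) (auto intro: fin_q)
    ultimately show "a \<in> A0 T" by blast
  qed
  have chain: "j \<in> I \<longrightarrow> (bas (e 0) - bas (e j) :: 'a \<Rightarrow> 'r) \<in> rspan ?B" for j
  proof (induction j)
    case 0 then show ?case by (simp only: diff_self rspan_zero simp_thms)
  next
    case (Suc j)
    show ?case
    proof
      assume a: "Suc j \<in> I"
      then have "j \<in> I" using dc[OF _ a] by simp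
      then have h1: "(bas (e 0) - bas (e j) :: 'a \<Rightarrow> 'r) \<in> rspan ?B" using Suc.IH by blast
      have h2: "bbd e j \<in> rspan ?B" using a by (intro rspan_gen) auto
      have "(bas (e 0) - bas (e j) :: 'a \<Rightarrow> 'r) + bbd e j \<in> rspan ?B" by (rule rspan_add[OF h1 h2])
      then show "(bas (e 0) - bas (e (Suc j)) :: 'a \<Rightarrow> 'r) \<in> rspan ?B"
        by (simp add: bbd_def)
    qed
  qed
  show "A0 T \<subseteq> rspan ?B"
  proof
    fix f :: "'a \<Rightarrow> 'r" assume f: "f \<in> A0 T"
    then have fs: "finite (supp f)" "supp f \<subseteq> T" by (auto simp: qring_def)
    have eq: "f = (\<Sum>x\<in>supp f. smul (f x) (bas x - bas (e 0)))" using decomp0 fs f by auto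
    have g: "(bas x - bas (e 0) :: 'a \<Rightarrow> 'r) \<in> rspan ?B" if xT: "x \<in> T" for x
    proof -
      obtain j where "j \<in> I" "x = e j" using xT T by auto
      then have "smul (-1) (bas (e 0) - bas x :: 'a \<Rightarrow> 'r) \<in> rspan ?B"
        using chain by (intro rspan_smul) auto
      moreover have "smul (-1) (bas (e 0) - bas x :: 'a \<Rightarrow> 'r) = bas x - bas (e 0)"
        by (rule ext) (simp add: smul_def)
      ultimately show ?thesis by simp
    qed
    have "(\<Sum>x\<in>supp f. smul (f x) (bas x - bas (e 0))) \<in> rspan ?B"
      using fs g by (intro rspan_sum) (auto intro: rspan_smul)
    then show "f \<in> rspan ?B" using eq by simp
  qed
qed

lemma card_B:
  assumes inj: "inj_on e I" and I: "I = {..<n}" and nt: "(0::'r::comm_ring_1) \<noteq> 1"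
  shows "card (bbd e ` {i. Suc i \<in> I} :: ('a \<Rightarrow> 'r) set) = n - 1"
proof -
  have set: "{i. Suc i \<in> I} = {..<n-1}" using I by auto
  have "inj_on (bbd e :: nat \<Rightarrow> 'a \<Rightarrow> 'r) {..<n-1}"
  proof (rule inj_onI, rule ccontr)
    fix i j assume ij: "i \<in> {..<n-1}" "j \<in> {..<n-1}" "(bbd e i :: 'a \<Rightarrow> 'r) = bbd e j" "i \<noteq> j"
    have mem: "i \<in> I" "Suc i \<in> I" "j \<in> I" "Suc j \<in> I" using ij I by auto
    have v1: "bbd e i (e j) = (bbd e j (e j) :: 'r)" "bbd e i (e i) = (bbd e j (e i) :: 'r)" using ij(3) by auto
    show False
    proof (cases "j = Suc i")
      case True
      then have "(1::'r) = 0" using v1(2) bb_val[where 'r='r, OF inj mem(1,2,1)] bb_val[where 'r='r, OF inj mem(3,4,1)] ij(4) by auto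
      then show False using nt by simp
    next
      case False
      then have "(1::'r) = 0" using v1(1) bb_val[where 'r='r, OF inj mem(1,2,3)] bb_val[where 'r='r, OF inj mem(3,4,3)] ij(4) by auto
      then show False using nt by simp
    qed
  qed
  then show ?thesis unfolding set by (simp add: card_image)
qed



theorem theorem8p3:
  fixes T :: "'a set" and e :: "nat \<Rightarrow> 'a" and I :: "nat set"
  assumes enum: "bij_betw e I T"
    and index: "I = UNIV \<or> (\<exists>n. I = {..<n})"
    and more_than_one: "\<exists>x\<in>T. \<exists>y\<in>T. x \<noteq> y"
    and nontriv: "(0::'r::comm_ring_1) \<noteq> 1"
  defines "A \<equiv> (qring T :: ('a \<Rightarrow> 'r) set)"
    and "Lm \<equiv> minus_mult (qmult triv_op) :: ('a \<Rightarrow> 'r) \<Rightarrow> ('a \<Rightarrow> 'r) \<Rightarrow> ('a \<Rightarrow> 'r)"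
    and "Bs \<equiv> {bas (e i) - bas (e (Suc i)) | i. Suc i \<in> I} :: ('a \<Rightarrow> 'r) set"
  shows "alg_pow Lm A 2 = alg_pow Lm A 3
    \<and> is_basis Bs (alg_pow Lm A 2)
    \<and> (finite T \<longrightarrow> card Bs = card T - 1)
    \<and> alg_pow Lm (alg_pow Lm A 2) 2 = {0}
    \<and> (\<forall>h::'r. 2 * h = 1 \<longrightarrow> alg_pow (plus_mult h (qmult triv_op)) A 2 = A)"
proof -
  obtain x0 where x0: "x0 \<in> T" using more_than_one by blast
  have inj: "inj_on e I" and eI: "e ` I = T" using enum by (auto simp: bij_betw_def)
  have dc: "\<And>i j. j \<le> i \<Longrightarrow> i \<in> I \<Longrightarrow> j \<in> I" using index by auto
  have I0: "0 \<in> I" using x0 eI dc by blast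
  have Bs_eq: "Bs = bbd e ` {i. Suc i \<in> I}" unfolding Bs_def bbd_def by auto
  have L2a: "alg_pow Lm A 2 = A0 T" unfolding A_def Lm_def using L2[OF x0] by blast
  have L3a: "alg_pow Lm A 3 = A0 T" unfolding A_def Lm_def using L2[OF x0] by blast
  have sp: "rspan Bs = A0 T" unfolding Bs_eq by (rule span[OF inj dc I0 eI])
  have ind: "rindep Bs" unfolding rindep_def Bs_eq
  proof (intro allI impI)
    fix S and c :: "('a \<Rightarrow> 'r) \<Rightarrow> 'r"
    assume "finite S \<and> S \<subseteq> bbd e ` {i. Suc i \<in> I} \<and> (\<Sum>b\<in>S. smul (c b) b) = 0"
    then show "\<forall>b\<in>S. c b = 0" by (intro indep[OF inj]) (auto intro: dc)
  qed
  have sub: "Bs \<subseteq> A0 T" using sp rspan_gen by blast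
  have basis: "is_basis Bs (alg_pow Lm A 2)" unfolding is_basis_def L2a using sp ind sub by blast
  have cardp: "card Bs = card T - 1" if fT: "finite T"
  proof -
    have "finite I" using fT enum bij_betw_finite by blast
    then obtain n where n: "I = {..<n}" using index by auto
    have "card T = n" using enum n bij_betw_same_card by fastforce
    then show ?thesis unfolding Bs_eq using card_B[OF inj n nontriv] by simp
  qed
  have sq: "alg_pow Lm (alg_pow Lm A 2) 2 = {0}" using L2a L2sq[of T, where 'r='r] by (simp add: Lm_def)
  have J: "\<forall>h::'r. 2 * h = 1 \<longrightarrow> alg_pow (plus_mult h (qmult triv_op)) A 2 = A"
    unfolding A_def using Jpart by blast
  show ?thesis using L2a L3a basis cardp sq J by simp
qed

end
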